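(* Under the setting below, for parameters $\gamma\in(0,1)$ and $\delta>0$, the policy $\mathcal P$ satisfies, for every $k\in\mathcal K$, $$\mathbb E\big[V_{\rm ESP}(\mathcal P)\big]\ge(1-\gamma)\Big(1-\frac\delta2\Big)V_{\rm ESP}(k)-\Phi(\epsilon,\delta,\gamma).$$
   Context: Fix integers $N,T\ge1$ and reals $\bar c>0$, $p_{\min}>0$, $\epsilon>0$, $\bar E\ge p_{\min}(1+\epsilon)$. For each $n\in\{1,\dots,N\}$ and $t\in\{1,\dots,T\}$ fix $c_{n,t}\in[0,\bar c]$ and a response function $z_{n,t}:[p_{\min},\infty)\to[0,1]$, fixed in advance (not depending on the policy's random choices). Let $K=\lfloor\log_{1+\epsilon}(\bar E/p_{\min})\rfloor$, $\mathcal K=\{1,\dots,K\}$, $p(k)=p_{\min}(1+\epsilon)^k$, $V_{t,n}(k)=p(k)\,c_{n,t}\,z_{n,t}(p(k))$, $V_{\rm ESP}(k)=\sum_{n=1}^N\sum_{t=1}^TV_{t,n}(k)$, and $\mathcal S=\sum_{i=1}^K(1+\epsilon)^i$. Policy $\mathcal P$ with parameters $\gamma\in(0,1)$, $\delta>0$: set $\omega_1(k)=1$ for all $k$. For $t=1,\dots,T$: let $h_t(k)=(1-\gamma)\frac{\omega_t(k)}{\sum_{j=1}^K\omega_t(j)}+\gamma\frac{(1+\epsilon)^k}{\mathcal S}$; for each $n$ independently draw $\kappa_{t,n}\in\mathcal K$ with $\Pr[\kappa_{t,n}=k]=h_t(k)$, offer price $p(\kappa_{t,n})$ and receive $V_{t,n}(\kappa_{t,n})$;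 write $\kappa_t=(\kappa_{t,n})_n$; for each $k$ let $V_t(k,\kappa_t)=\sum_{n=1}^NV_{t,n}(\kappa_{t,n})\mathbf 1\{\kappa_{t,n}=k\}$, $\hat V_t(k,\kappa_t)=\frac{V_t(k,\kappa_t)}{N\bar c\,p_{\min}}\cdot\frac{\gamma}{h_t(k)\,\mathcal S}$, and $\omega_{t+1}(k)=\omega_t(k)(1+\delta)^{\hat V_t(k,\kappa_t)}$. The policy's total revenue is $V_{\rm ESP}(\mathcal P)=\sum_{n=1}^N\sum_{t=1}^TV_{t,n}(\kappa_{t,n})$. Define $\Phi(\epsilon,\delta,\gamma)=\frac{1-\gamma}{\gamma}\cdot\frac{1+\epsilon}{\epsilon}\cdot\frac{N\bar E\bar c}{\delta}\cdot\ln\!\Big(\frac{\ln(\bar E/p_{\min})}{\ln(1+\epsilon)}\Big)$. *)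

theory Defs
  imports Complex_Main "HOL-Library.FuncSet"
begin

definition Kmax :: "real \<Rightarrow> real \<Rightarrow> real \<Rightarrow> nat" where
  "Kmax pmin eps Ebar = nat \<lfloor>log (1 + eps) (Ebar / pmin)\<rfloor>"

definition price :: "real \<Rightarrow> real \<Rightarrow> nat \<Rightarrow> real" where
  "price pmin eps k = pmin * (1 + eps) ^ k"

definition Vtn :: "real \<Rightarrow> real \<Rightarrow> (nat \<Rightarrow> nat \<Rightarrow> real) \<Rightarrow> (nat \<Rightarrow> nat \<Rightarrow> real \<Rightarrow> real)
    \<Rightarrow> nat \<Rightarrow> nat \<Rightarrow> nat \<Rightarrow> real" where
  "Vtn pmin eps c z t n k = price pmin eps k * c n t * z n t (price pmin eps k)"

definition V_ESP :: "nat \<Rightarrow> nat \<Rightarrow> real \<Rightarrow> real \<Rightarrow> (nat \<Rightarrow> nat \<Rightarrow> real) \<Rightarrow> (nat \<Rightarrow> nat \<Rightarrow> real \<Rightarrow> real)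
    \<Rightarrow> nat \<Rightarrow> real" where
  "V_ESP N T pmin eps c z k = (\<Sum>n=1..N. \<Sum>t=1..T. Vtn pmin eps c z t n k)"

definition Ssum :: "real \<Rightarrow> nat \<Rightarrow> real" where
  "Ssum eps K = (\<Sum>i=1..K. (1 + eps) ^ i)"

definition hdist :: "real \<Rightarrow> nat \<Rightarrow> real \<Rightarrow> (nat \<Rightarrow> real) \<Rightarrow> nat \<Rightarrow> real" where
  "hdist eps K gam w k =
     (1 - gam) * w k / (\<Sum>j=1..K. w j) + gam * (1 + eps) ^ k / Ssum eps K"

definition wupd :: "nat \<Rightarrow> real \<Rightarrow> real \<Rightarrow> real \<Rightarrow> (nat \<Rightarrow> nat \<Rightarrow> real) \<Rightarrow> (nat \<Rightarrow> nat \<Rightarrow> real \<Rightarrow> real)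
    \<Rightarrow> real \<Rightarrow> real \<Rightarrow> nat \<Rightarrow> nat \<Rightarrow> (nat \<Rightarrow> real) \<Rightarrow> (nat \<Rightarrow> nat) \<Rightarrow> nat \<Rightarrow> real" where
  "wupd N cbar pmin eps c z gam del K t w kappa k =
     (let Vt = (\<Sum>n=1..N. if kappa n = k then Vtn pmin eps c z t n (kappa n) else 0);
          Vhat = Vt / (real N * cbar * pmin) * (gam / (hdist eps K gam w k * Ssum eps K))
      in w k * (1 + del) powr Vhat)"

text \<open>Expected total revenue collected in the remaining m rounds, starting at round t with
  weights w: the expectation over the (adaptive) random draws, written out as a finite sum
  over all draw vectors of the current round weighted by their probability.\<close>
primrec exp_rev :: "nat \<Rightarrow> nat \<Rightarrow> real \<Rightarrow> real \<Rightarrow> real \<Rightarrow> (nat \<Rightarrow> nat \<Rightarrow> real) \<Rightarrow> (nat \<Rightarrow> nat \<Rightarrow> real \<Rightarrow> real)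
    \<Rightarrow> real \<Rightarrow> real \<Rightarrow> nat \<Rightarrow> nat \<Rightarrow> (nat \<Rightarrow> real) \<Rightarrow> real" where
  "exp_rev 0 N cbar pmin eps c z gam del K t w = 0"
| "exp_rev (Suc m) N cbar pmin eps c z gam del K t w =
     (\<Sum>kappa \<in> PiE {1..N} (\<lambda>_. {1..K}).
        (\<Prod>n=1..N. hdist eps K gam w (kappa n)) *
        ((\<Sum>n=1..N. Vtn pmin eps c z t n (kappa n)) +
         exp_rev m N cbar pmin eps c z gam del K (Suc t)
           (wupd N cbar pmin eps c z gam del K t w kappa)))"

definition policy_expected_revenue :: "nat \<Rightarrow> nat \<Rightarrow> real \<Rightarrow> real \<Rightarrow> real \<Rightarrow> real
    \<Rightarrow> (nat \<Rightarrow> nat \<Rightarrow> real) \<Rightarrow> (nat \<Rightarrow> nat \<Rightarrow> real \<Rightarrow> real) \<Rightarrow> real \<Rightarrow> real \<Rightarrow> real" where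
  "policy_expected_revenue N T cbar pmin eps Ebar c z gam del =
     exp_rev T N cbar pmin eps c z gam del (Kmax pmin eps Ebar) 1 (\<lambda>_. 1)"

definition Phi :: "nat \<Rightarrow> real \<Rightarrow> real \<Rightarrow> real \<Rightarrow> real \<Rightarrow> real \<Rightarrow> real \<Rightarrow> real" where
  "Phi N cbar pmin Ebar eps del gam =
     (1 - gam) / gam * ((1 + eps) / eps) * (real N * Ebar * cbar / del) *
     ln (ln (Ebar / pmin) / ln (1 + eps))"

end

theory Submission imports Defs "HOL-Analysis.Analysis" begin

lemma powr_le_lin:
  fixes d x :: real assumes "d > 0" "0 \<le> x" "x \<le> 1"
  shows "(1 + d) powr x \<le> 1 + d * x"
proof -
  have "exp ((1 - x) *\<^sub>R 0 + x *\<^sub>R ln (1+d)) \<le> (1 - x) * exp 0 + x * exp (ln (1+d))"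
    using convex_onD[OF exp_convex, of x 0 "ln (1+d)"] assms by auto
  thus ?thesis using assms by (simp add: powr_def algebra_simps)
qed

lemma ln_lower:
  fixes d :: real assumes "d \<ge> 0"
  shows "d - d^2/2 \<le> ln (1 + d)"
proof -
  let ?f = "\<lambda>x::real. ln (1 + x) - x + x^2/2"
  have "?f 0 \<le> ?f d"
  proof (rule DERIV_nonneg_imp_nondecreasing[OF assms])
    fix x :: real assume x: "0 \<le> x" "x \<le> d"
    have "DERIV ?f x :> (1/(1+x) - 1 + x)"
      using x by (auto intro!: derivative_eq_intros)
    moreover have "1/(1+x) - 1 + x \<ge> 0"
      using x by (simp add: field_simps power2_eq_square)
    ultimately show "\<exists>y. DERIV ?f x :> y \<and> y \<ge> 0" by blast
  qed
  thus ?thesis by simp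
qed

lemma exp_single:
  fixes p f :: "'b \<Rightarrow> real"
  assumes "finite I" "m \<in> I" "finite A" "(\<Sum>a\<in>A. p a) = 1"
  shows "(\<Sum>g\<in>PiE I (\<lambda>_. A). (\<Prod>x\<in>I. p (g x)) * f (g m)) = (\<Sum>a\<in>A. p a * f a)"
proof -
  have "(\<Prod>x\<in>I. \<Sum>y\<in>A. p y * (if x = m then f y else 1))
      = (\<Sum>g\<in>PiE I (\<lambda>_. A). \<Prod>x\<in>I. p (g x) * (if x = m then f (g x) else 1))"
    by (rule prod_sum_PiE) (use assms in auto)
  moreover have "(\<Prod>x\<in>I. \<Sum>y\<in>A. p y * (if x = m then f y else 1)) = (\<Sum>a\<in>A. p a * f a)"
  proof -
    have "(\<Prod>x\<in>I. \<Sum>y\<in>A. p y * (if x = m then f y else 1))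
       = (\<Prod>x\<in>I. if x = m then (\<Sum>a\<in>A. p a * f a) else 1)"
      by (rule prod.cong) (auto simp: assms(4))
    also have "\<dots> = (\<Sum>a\<in>A. p a * f a)" using assms by (simp add: prod.delta)
    finally show ?thesis .
  qed
  moreover have "\<And>g. (\<Prod>x\<in>I. p (g x) * (if x = m then f (g x) else 1)) = (\<Prod>x\<in>I. p (g x)) * f (g m)"
  proof -
    fix g
    have "(\<Prod>x\<in>I. p (g x) * (if x = m then f (g x) else 1)) = (\<Prod>x\<in>I. p (g x)) * (\<Prod>x\<in>I. (if x = m then f (g x) else 1))"
      by (rule prod.distrib)
    also have "(\<Prod>x\<in>I. (if x = m then f (g x) else 1)) = f (g m)" using assms by (simp add: prod.delta)
    finally show "(\<Prod>x\<in>I. p (g x) * (if x = m then f (g x) else 1)) = (\<Prod>x\<in>I. p (g x)) * f (g m)" .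
  qed
  ultimately show ?thesis by simp
qed

lemma exp_one:
  fixes p :: "'b \<Rightarrow> real"
  assumes "finite I" "finite A" "(\<Sum>a\<in>A. p a) = 1"
  shows "(\<Sum>g\<in>PiE I (\<lambda>_. A). (\<Prod>x\<in>I. p (g x))) = 1"
proof -
  have "(\<Prod>x\<in>I. \<Sum>y\<in>A. p y) = (\<Sum>g\<in>PiE I (\<lambda>_. A). \<Prod>x\<in>I. p (g x))"
    by (rule prod_sum_PiE) (use assms in auto)
  thus ?thesis using assms by simp
qed

lemma geo: fixes e :: real shows "e * (\<Sum>i=1..K. (1+e)^i) = (1+e)^(Suc K) - (1+e)"
  by (induction K) (auto simp: algebra_simps)


context
  fixes N T :: nat and cbar pmin eps Ebar gam del :: real
    and c :: "nat \<Rightarrow> nat \<Rightarrow> real" and z :: "nat \<Rightarrow> nat \<Rightarrow> real \<Rightarrow> real" and k :: nat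
  assumes N1: "N \<ge> 1"
    and cb: "cbar > 0" and pm: "pmin > 0" and ep: "eps > 0" and Eb: "Ebar \<ge> pmin * (1 + eps)"
    and cc: "\<And>n t. n \<in> {1..N} \<Longrightarrow> t \<in> {1..T} \<Longrightarrow> 0 \<le> c n t \<and> c n t \<le> cbar"
    and zz: "\<And>n t x. n \<in> {1..N} \<Longrightarrow> t \<in> {1..T} \<Longrightarrow> x \<ge> pmin \<Longrightarrow> 0 \<le> z n t x \<and> z n t x \<le> 1"
    and g0: "0 < gam" and g1: "gam < 1" and d0: "del > 0"
    and kK: "k \<in> {1..Kmax pmin eps Ebar}"
begin

abbreviation "KK \<equiv> Kmax pmin eps Ebar"
abbreviation "SS \<equiv> Ssum eps KK"

lemma K1: "KK \<ge> 1" using kK by auto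

lemma S_pos: "SS > 0"
  unfolding Ssum_def using K1 ep by (intro sum_pos) auto

lemma V_nonneg: "n \<in> {1..N} \<Longrightarrow> t \<in> {1..T} \<Longrightarrow> j \<ge> 1 \<Longrightarrow> 0 \<le> Vtn pmin eps c z t n j"
proof -
  assume a: "n \<in> {1..N}" "t \<in> {1..T}" "j \<ge> 1"
  have "price pmin eps j \<ge> pmin" unfolding price_def using pm ep
    by (simp add: mult_le_cancel_left1 one_le_power)
  thus ?thesis unfolding Vtn_def using zz[OF a(1,2)] cc[OF a(1,2)] pm ep
    by (intro mult_nonneg_nonneg) (auto simp: price_def)
qed

lemma V_upper: "n \<in> {1..N} \<Longrightarrow> t \<in> {1..T} \<Longrightarrow> j \<ge> 1 \<Longrightarrow> Vtn pmin eps c z t n j \<le> price pmin eps j * cbar"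
proof -
  assume a: "n \<in> {1..N}" "t \<in> {1..T}" "j \<ge> 1"
  have pp: "price pmin eps j \<ge> pmin" unfolding price_def using pm ep
    by (simp add: mult_le_cancel_left1 one_le_power)
  have "c n t * z n t (price pmin eps j) \<le> cbar * 1"
    using zz[OF a(1,2) pp] cc[OF a(1,2)] by (intro mult_mono) auto
  thus ?thesis unfolding Vtn_def using pp pm
    by (metis mult.assoc mult.right_neutral mult_left_mono order_trans less_imp_le)
qed

definition WW :: "(nat \<Rightarrow> real) \<Rightarrow> real" where "WW w = (\<Sum>j=1..KK. w j)"

lemma h_facts:
  assumes wp: "\<And>j. j \<in> {1..KK} \<Longrightarrow> w j > 0"
  shows "(\<Sum>j=1..KK. hdist eps KK gam w j) = 1"
    and "\<And>j. j \<in> {1..KK} \<Longrightarrow> hdist eps KK gam w j \<ge> gam * (1+eps)^j / SS"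
    and "\<And>j. j \<in> {1..KK} \<Longrightarrow> hdist eps KK gam w j > 0"
    and "\<And>j. j \<in> {1..KK} \<Longrightarrow> (1 - gam) * w j / WW w \<le> hdist eps KK gam w j"
proof -
  have W: "WW w > 0" unfolding WW_def using K1 wp by (intro sum_pos) auto
  have "(\<Sum>j=1..KK. hdist eps KK gam w j)
     = (1 - gam) / WW w * (\<Sum>j=1..KK. w j) + gam / SS * (\<Sum>j=1..KK. (1+eps)^j)"
    unfolding hdist_def WW_def by (simp add: sum.distrib sum_distrib_left)
  also have "\<dots> = 1" using W S_pos unfolding WW_def Ssum_def by simp
  finally show "(\<Sum>j=1..KK. hdist eps KK gam w j) = 1" .
  fix j assume j: "j \<in> {1..KK}"
  have a: "(1 - gam) * w j / (\<Sum>j=1..KK. w j) \<ge> 0" using g1 wp[OF j] W unfolding WW_def by simp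
  show "hdist eps KK gam w j \<ge> gam * (1+eps)^j / SS" unfolding hdist_def using a by simp
  have "gam * (1+eps)^j / SS > 0" using g0 ep S_pos by simp
  thus "hdist eps KK gam w j > 0" unfolding hdist_def using a by simp
  have "gam * (1+eps)^j / SS \<ge> 0" using g0 ep S_pos by simp
  thus "(1 - gam) * w j / WW w \<le> hdist eps KK gam w j" unfolding hdist_def WW_def by simp
qed

definition "Vs t kap j = (\<Sum>n=1..N. if kap n = j then Vtn pmin eps c z t n (kap n) else 0)"
definition "vh t w kap j = Vs t kap j / (real N * cbar * pmin) * (gam / (hdist eps KK gam w j * SS))"
definition "CC = del * gam / ((1 - gam) * real N * cbar * pmin * SS)"

lemma wupd_eq: "wupd N cbar pmin eps c z gam del KK t w kap j = w j * (1 + del) powr vh t w kap j"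
  unfolding wupd_def vh_def Vs_def Let_def by simp

lemma Vs_bounds:
  assumes t: "t \<in> {1..T}" and kap: "kap \<in> PiE {1..N} (\<lambda>_. {1..KK})" and j: "j \<in> {1..KK}"
  shows "0 \<le> Vs t kap j" "Vs t kap j \<le> real N * (price pmin eps j * cbar)"
proof -
  have e: "\<And>n. n \<in> {1..N} \<Longrightarrow> (if kap n = j then Vtn pmin eps c z t n (kap n) else 0)
          = (if kap n = j then Vtn pmin eps c z t n j else 0)" by auto
  have Vs': "Vs t kap j = (\<Sum>n=1..N. if kap n = j then Vtn pmin eps c z t n j else 0)"
    unfolding Vs_def using e by (rule sum.cong[OF refl])
  have pc: "price pmin eps j * cbar \<ge> 0" using pm ep cb by (simp add: price_def)
  show "0 \<le> Vs t kap j" unfolding Vs' using V_nonneg t j by (intro sum_nonneg) auto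
  have "Vs t kap j \<le> (\<Sum>n=1..N. price pmin eps j * cbar)" unfolding Vs'
    using V_upper t j pc by (intro sum_mono) auto
  thus "Vs t kap j \<le> real N * (price pmin eps j * cbar)" by simp
qed

lemma vh_bounds:
  assumes t: "t \<in> {1..T}" and kap: "kap \<in> PiE {1..N} (\<lambda>_. {1..KK})" and j: "j \<in> {1..KK}"
    and wp: "\<And>j. j \<in> {1..KK} \<Longrightarrow> w j > 0"
  shows "0 \<le> vh t w kap j" "vh t w kap j \<le> 1"
proof -
  have h: "hdist eps KK gam w j > 0" "hdist eps KK gam w j \<ge> gam * (1+eps)^j / SS"
    using h_facts(2,3)[OF wp j] by auto
  have N0: "real N > 0" using N1 by simp
  show "0 \<le> vh t w kap j" unfolding vh_def using Vs_bounds[OF t kap j] h S_pos g0 N0 cb pm by simp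
  have "vh t w kap j \<le> real N * (price pmin eps j * cbar) / (real N * cbar * pmin) * (gam / (hdist eps KK gam w j * SS))"
    unfolding vh_def using Vs_bounds[OF t kap j] h S_pos g0 N0 cb pm
    by (intro mult_right_mono divide_right_mono) auto
  also have "\<dots> = (1+eps)^j * gam / (hdist eps KK gam w j * SS)"
    using N0 cb pm by (simp add: price_def field_simps)
  also have "\<dots> \<le> 1" using h S_pos by (simp add: field_simps)
  finally show "vh t w kap j \<le> 1" .
qed

lemma sum_Vs:
  assumes kap: "kap \<in> PiE {1..N} (\<lambda>_. {1..KK})"
  shows "(\<Sum>j=1..KK. Vs t kap j) = (\<Sum>n=1..N. Vtn pmin eps c z t n (kap n))"
proof -
  have "(\<Sum>j=1..KK. Vs t kap j) = (\<Sum>n=1..N. \<Sum>j=1..KK. if kap n = j then Vtn pmin eps c z t n (kap n) else 0)"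
    unfolding Vs_def by (rule sum.swap)
  also have "\<dots> = (\<Sum>n=1..N. Vtn pmin eps c z t n (kap n))"
    using kap by (intro sum.cong refl) (auto simp: sum.delta PiE_iff)
  finally show ?thesis .
qed

lemma lnW_step:
  assumes t: "t \<in> {1..T}" and kap: "kap \<in> PiE {1..N} (\<lambda>_. {1..KK})"
    and wp: "\<And>j. j \<in> {1..KK} \<Longrightarrow> w j > 0"
  shows "ln (WW (wupd N cbar pmin eps c z gam del KK t w kap))
     \<le> ln (WW w) + CC * (\<Sum>n=1..N. Vtn pmin eps c z t n (kap n))"
proof -
  let ?R = "\<Sum>n=1..N. Vtn pmin eps c z t n (kap n)"
  let ?h = "hdist eps KK gam w"
  have W: "WW w > 0" unfolding WW_def using K1 wp by (intro sum_pos) auto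
  have N0: "real N > 0" using N1 by simp
  have R0: "?R \<ge> 0" using V_nonneg t kap by (intro sum_nonneg) (auto simp: PiE_iff)
  have "WW (wupd N cbar pmin eps c z gam del KK t w kap) = (\<Sum>j=1..KK. w j * (1 + del) powr vh t w kap j)"
    unfolding WW_def wupd_eq ..
  also have "\<dots> \<le> (\<Sum>j=1..KK. w j * (1 + del * vh t w kap j))"
    using powr_le_lin[OF d0] vh_bounds[OF t kap _ wp] wp
    by (intro sum_mono mult_left_mono) (auto simp: less_imp_le)
  also have "\<dots> = WW w + del * (\<Sum>j=1..KK. w j * vh t w kap j)"
    unfolding WW_def by (simp add: algebra_simps sum.distrib sum_distrib_left)
  also have "(\<Sum>j=1..KK. w j * vh t w kap j) \<le> (\<Sum>j=1..KK. WW w / (1 - gam) * ?h j * vh t w kap j)"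
  proof (intro sum_mono mult_right_mono)
    fix j assume j: "j \<in> {1..KK}"
    show "0 \<le> vh t w kap j" using vh_bounds[OF t kap j wp] by simp
    have "(1 - gam) * w j / WW w \<le> ?h j" using h_facts(4)[OF wp j] .
    thus "w j \<le> WW w / (1 - gam) * ?h j" using W g1 by (simp add: field_simps)
  qed
  also have "(\<Sum>j=1..KK. WW w / (1 - gam) * ?h j * vh t w kap j)
      = WW w / (1 - gam) * (gam / (real N * cbar * pmin * SS)) * (\<Sum>j=1..KK. Vs t kap j)"
  proof -
    have "\<And>j. j \<in> {1..KK} \<Longrightarrow> WW w / (1 - gam) * ?h j * vh t w kap j
        = WW w / (1 - gam) * (gam / (real N * cbar * pmin * SS)) * Vs t kap j"
    proof -
      fix j assume j: "j \<in> {1..KK}"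
      have "?h j > 0" using h_facts(3)[OF wp j] .
      thus "WW w / (1 - gam) * ?h j * vh t w kap j
        = WW w / (1 - gam) * (gam / (real N * cbar * pmin * SS)) * Vs t kap j"
        unfolding vh_def using S_pos g1 cb pm N0 by (simp add: field_simps)
    qed
    thus ?thesis by (simp add: sum_distrib_left)
  qed
  finally have "WW (wupd N cbar pmin eps c z gam del KK t w kap)
     \<le> WW w + del * (WW w / (1 - gam) * (gam / (real N * cbar * pmin * SS)) * ?R)"
    unfolding sum_Vs[OF kap] using d0 by (simp add: mult_left_mono)
  also have "\<dots> = WW w * (1 + CC * ?R)" unfolding CC_def by (simp add: field_simps)
  finally have le: "WW (wupd N cbar pmin eps c z gam del KK t w kap) \<le> WW w * (1 + CC * ?R)" .
  have C0: "CC \<ge> 0" unfolding CC_def using d0 g0 g1 N0 cb pm S_pos by simp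
  have W'0: "WW (wupd N cbar pmin eps c z gam del KK t w kap) > 0"
    unfolding WW_def wupd_eq using K1 wp d0 by (intro sum_pos) auto
  have "ln (WW (wupd N cbar pmin eps c z gam del KK t w kap)) \<le> ln (WW w * (1 + CC * ?R))"
    using le W'0 by simp
  also have "\<dots> = ln (WW w) + ln (1 + CC * ?R)" proof -
    have "CC * ?R \<ge> 0" using C0 R0 by simp
    hence "1 + CC * ?R > 0" by linarith
    thus ?thesis using W by (simp add: ln_mult)
  qed
  also have "\<dots> \<le> ln (WW w) + CC * ?R" using C0 R0 by (simp add: ln_add_one_self_le_self)
  finally show ?thesis .
qed

lemma E_vh:
  assumes t: "t \<in> {1..T}" and wp: "\<And>j. j \<in> {1..KK} \<Longrightarrow> w j > 0"
  shows "(\<Sum>kap\<in>PiE {1..N} (\<lambda>_. {1..KK}). (\<Prod>n=1..N. hdist eps KK gam w (kap n)) * vh t w kap k)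
     = gam / (real N * cbar * pmin * SS) * (\<Sum>n=1..N. Vtn pmin eps c z t n k)"
proof -
  let ?h = "hdist eps KK gam w"
  let ?P = "\<lambda>kap. \<Prod>n=1..N. ?h (kap n)"
  let ?A = "1 / (real N * cbar * pmin) * (gam / (?h k * SS))"
  define f where "f n y = (if y = k then Vtn pmin eps c z t n k else 0)" for n y
  have vh': "\<And>kap. vh t w kap k = ?A * (\<Sum>n=1..N. f n (kap n))"
    unfolding vh_def Vs_def f_def by (auto intro!: sum.cong)
  have "(\<Sum>kap\<in>PiE {1..N} (\<lambda>_. {1..KK}). ?P kap * vh t w kap k)
      = ?A * (\<Sum>n=1..N. \<Sum>kap\<in>PiE {1..N} (\<lambda>_. {1..KK}). ?P kap * f n (kap n))"
  proof -
    have "(\<Sum>kap\<in>PiE {1..N} (\<lambda>_. {1..KK}). ?P kap * vh t w kap k)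
       = ?A * (\<Sum>kap\<in>PiE {1..N} (\<lambda>_. {1..KK}). \<Sum>n=1..N. ?P kap * f n (kap n))"
      unfolding vh' sum_distrib_left by (simp add: mult_ac sum_distrib_left)
    also have "(\<Sum>kap\<in>PiE {1..N} (\<lambda>_. {1..KK}). \<Sum>n=1..N. ?P kap * f n (kap n))
       = (\<Sum>n=1..N. \<Sum>kap\<in>PiE {1..N} (\<lambda>_. {1..KK}). ?P kap * f n (kap n))"
      by (rule sum.swap)
    finally show ?thesis .
  qed
  also have "\<dots> = ?A * (\<Sum>n=1..N. \<Sum>y=1..KK. ?h y * f n y)"
    by (intro arg_cong[where f="\<lambda>x. ?A * x"] sum.cong refl exp_single) (use h_facts(1)[OF wp] in auto)
  also have "\<dots> = ?A * (\<Sum>n=1..N. ?h k * Vtn pmin eps c z t n k)"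
    unfolding f_def using kK by (simp add: if_distrib sum.delta' cong: if_cong)
  also have "\<dots> = gam / (real N * cbar * pmin * SS) * (\<Sum>n=1..N. Vtn pmin eps c z t n k)"
  proof -
    have hk: "?h k > 0" using h_facts(3)[OF wp kK] .
    have N0: "real N > 0" using N1 by simp
    have "(\<Sum>n=1..N. ?h k * Vtn pmin eps c z t n k) = ?h k * (\<Sum>n=1..N. Vtn pmin eps c z t n k)"
      by (simp add: sum_distrib_left)
    thus ?thesis using hk S_pos N0 cb pm by (simp add: field_simps)
  qed
  finally show ?thesis .
qed

lemma main_ind:
  "\<forall>t (w::nat\<Rightarrow>real). 1 \<le> t \<longrightarrow> t + m \<le> T + 1 \<longrightarrow> (\<forall>j\<in>{1..KK}. w j > 0) \<longrightarrow>
     CC * exp_rev m N cbar pmin eps c z gam del KK t w + ln (WW w)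
     \<ge> ln (1 + del) * (gam / (real N * cbar * pmin * SS)) * (\<Sum>s=t..<t+m. \<Sum>n=1..N. Vtn pmin eps c z s n k) + ln (w k)"
proof (induction m)
  case 0
  show ?case
  proof (intro allI impI)
    fix t and w :: "nat \<Rightarrow> real" assume "1 \<le> t" "t + 0 \<le> T + 1" and wp: "\<forall>j\<in>{1..KK}. 0 < w j"
    have le: "w k \<le> WW w" unfolding WW_def using wp kK by (intro member_le_sum) (auto simp: less_imp_le)
    have pos: "w k > 0" using wp kK by auto
    have "ln (w k) \<le> ln (WW w)" using le pos by simp
    thus "CC * exp_rev 0 N cbar pmin eps c z gam del KK t w + ln (WW w)
     \<ge> ln (1 + del) * (gam / (real N * cbar * pmin * SS)) * (\<Sum>s=t..<t+0. \<Sum>n=1..N. Vtn pmin eps c z s n k) + ln (w k)"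
      using wp kK by simp
  qed
next
  case (Suc m)
  show ?case
  proof (intro allI impI)
    fix t and w :: "nat \<Rightarrow> real" assume t1: "1 \<le> t" and tm: "t + Suc m \<le> T + 1" and wp': "\<forall>j\<in>{1..KK}. 0 < w j"
    have wp: "\<And>j. j \<in> {1..KK} \<Longrightarrow> w j > 0" using wp' by auto
    have t: "t \<in> {1..T}" using t1 tm by auto
    let ?h = "hdist eps KK gam w"
    let ?P = "\<lambda>kap. \<Prod>n=1..N. ?h (kap n)"
    let ?R = "\<lambda>kap. \<Sum>n=1..N. Vtn pmin eps c z t n (kap n)"
    let ?w' = "\<lambda>kap. wupd N cbar pmin eps c z gam del KK t w kap"
    let ?E = "\<lambda>kap. exp_rev m N cbar pmin eps c z gam del KK (Suc t) (?w' kap)"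
    let ?L = "ln (1 + del)"
    let ?a = "gam / (real N * cbar * pmin * SS)"
    let ?rest = "\<Sum>s=Suc t..<Suc t+m. \<Sum>n=1..N. Vtn pmin eps c z s n k"
    define X where "X = ?L * ?a * ?rest + ln (w k) - ln (WW w)"
    let ?G = "\<lambda>kap. X + ?L * vh t w kap k"
    let ?I = "PiE {1..N} (\<lambda>_. {1..KK})"
    have pt: "CC * (?R kap + ?E kap) \<ge> ?G kap" if kap: "kap \<in> ?I" for kap
    proof -
      have w'p: "\<forall>j\<in>{1..KK}. 0 < ?w' kap j" unfolding wupd_eq using wp d0 by auto
      have IH: "CC * ?E kap + ln (WW (?w' kap)) \<ge> ?L * ?a * ?rest + ln (?w' kap k)"
        using Suc.IH[rule_format, of "Suc t" "?w' kap"] w'p t1 tm by auto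
      have lk: "ln (?w' kap k) = ln (w k) + vh t w kap k * ?L"
        unfolding wupd_eq using wp[OF kK] d0 by (simp add: ln_mult ln_powr)
      have lW: "ln (WW (?w' kap)) \<le> ln (WW w) + CC * ?R kap" using lnW_step[OF t kap wp] .
      show ?thesis using IH lk lW unfolding X_def by (simp add: algebra_simps)
    qed
    have P0: "\<And>kap. kap \<in> ?I \<Longrightarrow> ?P kap \<ge> 0"
      using h_facts(3)[OF wp] by (intro prod_nonneg) (auto simp: PiE_iff less_imp_le)
    have sumP: "(\<Sum>kap\<in>?I. ?P kap) = 1" by (rule exp_one) (use h_facts(1)[OF wp] in auto)
    have "CC * exp_rev (Suc m) N cbar pmin eps c z gam del KK t w = (\<Sum>kap\<in>?I. ?P kap * (CC * (?R kap + ?E kap)))"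
      by (simp add: sum_distrib_left mult_ac)
    also have "\<dots> \<ge> (\<Sum>kap\<in>?I. ?P kap * ?G kap)"
      using pt P0 by (intro sum_mono mult_left_mono) auto
    also have "(\<Sum>kap\<in>?I. ?P kap * ?G kap) = (\<Sum>kap\<in>?I. X * ?P kap + ?L * (?P kap * vh t w kap k))"
      by (intro sum.cong) (simp_all add: algebra_simps)
    also have "\<dots> = X * (\<Sum>kap\<in>?I. ?P kap) + ?L * (\<Sum>kap\<in>?I. ?P kap * vh t w kap k)"
      by (simp add: sum.distrib sum_distrib_left)
    also have "\<dots> = ?L * ?a * ?rest + ln (w k) - ln (WW w) + ?L * (?a * (\<Sum>n=1..N. Vtn pmin eps c z t n k))"
      using E_vh[OF t wp] unfolding sumP X_def by simp
    finally have A: "CC * exp_rev (Suc m) N cbar pmin eps c z gam del KK t w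
       \<ge> ?L * ?a * ?rest + ln (w k) - ln (WW w) + ?L * (?a * (\<Sum>n=1..N. Vtn pmin eps c z t n k))" .
    have "(\<Sum>s=t..<t+Suc m. \<Sum>n=1..N. Vtn pmin eps c z s n k) = (\<Sum>n=1..N. Vtn pmin eps c z t n k) + ?rest"
      by (subst sum.atLeast_Suc_lessThan) auto
    thus "CC * exp_rev (Suc m) N cbar pmin eps c z gam del KK t w + ln (WW w)
     \<ge> ?L * ?a * (\<Sum>s=t..<t+Suc m. \<Sum>n=1..N. Vtn pmin eps c z s n k) + ln (w k)"
      using A by (simp add: algebra_simps)
  qed
qed

lemma K_le_log: "real KK \<le> log (1 + eps) (Ebar / pmin)"
proof -
  have "log (1 + eps) (Ebar / pmin) \<ge> 1"
  proof -
    have "Ebar / pmin \<ge> 1 + eps" using Eb pm by (simp add: field_simps)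
    hence "log (1 + eps) (Ebar / pmin) \<ge> log (1 + eps) (1 + eps)" using ep
      by (subst log_le_cancel_iff) auto
    thus ?thesis using ep by simp
  qed
  thus ?thesis unfolding Kmax_def by linarith
qed

lemma powK: "(1 + eps) ^ KK \<le> Ebar / pmin"
proof -
  have "(1 + eps) ^ KK = (1 + eps) powr real KK" using ep by (simp add: powr_realpow)
  also have "\<dots> \<le> (1 + eps) powr log (1 + eps) (Ebar / pmin)"
    using K_le_log ep by (intro powr_mono) auto
  also have "\<dots> = Ebar / pmin"
  proof -
    have "pmin * (1 + eps) > 0" using pm ep by simp
    hence "Ebar > 0" using Eb by linarith
    thus ?thesis using ep pm by (subst powr_log_cancel) auto
  qed
  finally show ?thesis .
qed

lemma pS_le: "pmin * SS \<le> (1 + eps) / eps * Ebar"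
proof -
  have "eps * SS = (1+eps)^(Suc KK) - (1+eps)" unfolding Ssum_def by (rule geo)
  also have "\<dots> \<le> (1 + eps) * (Ebar / pmin)"
  proof -
    have "(1+eps)*(1+eps)^KK \<le> (1+eps)*(Ebar/pmin)" by (rule mult_left_mono[OF powK]) (use ep in auto)
    thus ?thesis unfolding power_Suc using ep by linarith
  qed
  finally have "eps * SS \<le> (1 + eps) * (Ebar / pmin)" .
  hence "pmin * (eps * SS) \<le> pmin * ((1 + eps) * (Ebar / pmin))" using pm by (intro mult_left_mono) auto
  moreover have "pmin * ((1 + eps) * (Ebar / pmin)) = (1+eps)*Ebar" using pm by simp
  ultimately have "eps * (pmin * SS) \<le> (1 + eps) * Ebar" by (simp add: mult_ac)
  thus ?thesis using ep by (simp add: field_simps)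
qed

lemma lnK_le: "ln (real KK) \<le> ln (ln (Ebar / pmin) / ln (1 + eps))"
  using K_le_log K1 unfolding log_def by simp

lemma final:
  assumes T1: "T \<ge> 1"
  shows "policy_expected_revenue N T cbar pmin eps Ebar c z gam del
           \<ge> (1 - gam) * (1 - del / 2) * V_ESP N T pmin eps c z k - Phi N cbar pmin Ebar eps del gam"
proof -
  let ?E = "policy_expected_revenue N T cbar pmin eps Ebar c z gam del"
  let ?V = "V_ESP N T pmin eps c z k"
  let ?L = "ln (1 + del)"
  let ?a = "gam / (real N * cbar * pmin * SS)"
  let ?lnK = "ln (real KK)"
  have N0: "real N > 0" using N1 by simp
  have W1: "WW (\<lambda>_. 1) = real KK" unfolding WW_def by simp
  have sw: "(\<Sum>s=1..<1+T. \<Sum>n=1..N. Vtn pmin eps c z s n k) = ?V"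
    unfolding V_ESP_def by (subst sum.swap) (simp add: atLeastLessThanSuc_atLeastAtMost)
  have M: "CC * ?E + ?lnK \<ge> ?L * ?a * ?V"
    using main_ind[of T, rule_format, of 1 "\<lambda>_. 1"] T1 unfolding W1 sw policy_expected_revenue_def
    by simp
  have V0: "?V \<ge> 0" unfolding V_ESP_def using V_nonneg kK by (intro sum_nonneg) auto
  have C0: "CC > 0" unfolding CC_def using d0 g0 g1 N0 cb pm S_pos by simp
  have a0: "?a > 0" using g0 N0 cb pm S_pos by simp
  have A1: "CC * ((1 - gam) * (1 - del / 2)) = ?a * (del - del^2/2)"
    unfolding CC_def using g1 N0 cb pm S_pos by (simp add: field_simps power2_eq_square)
  have A2: "CC * ((1 - gam) * (1 - del / 2) * ?V) \<le> ?L * ?a * ?V"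
  proof -
    have "CC * ((1 - gam) * (1 - del / 2) * ?V) = ?a * (del - del^2/2) * ?V"
      using A1 by (simp add: mult.assoc[symmetric])
    also have "\<dots> \<le> ?a * ?L * ?V" using ln_lower[of del] d0 a0 V0
      by (intro mult_right_mono mult_left_mono) auto
    finally show ?thesis by (simp add: mult_ac)
  qed
  have lnK0: "?lnK \<ge> 0" using K1 by simp
  have B: "CC * Phi N cbar pmin Ebar eps del gam = (1 + eps) * Ebar / (eps * (pmin * SS)) * ln (ln (Ebar / pmin) / ln (1 + eps))"
    unfolding CC_def Phi_def using g0 g1 N0 cb pm S_pos d0 ep by (simp add: field_simps)
  have r1: "(1 + eps) * Ebar / (eps * (pmin * SS)) \<ge> 1"
    using pS_le ep pm S_pos by (simp add: field_simps)
  have ll0: "ln (ln (Ebar / pmin) / ln (1 + eps)) \<ge> 0" using lnK_le lnK0 by linarith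
  have A3: "CC * Phi N cbar pmin Ebar eps del gam \<ge> ?lnK"
  proof -
    have "?lnK \<le> 1 * ln (ln (Ebar / pmin) / ln (1 + eps))" using lnK_le by simp
    also have "\<dots> \<le> (1 + eps) * Ebar / (eps * (pmin * SS)) * ln (ln (Ebar / pmin) / ln (1 + eps))"
      using r1 ll0 by (intro mult_right_mono) auto
    finally show ?thesis using B by simp
  qed
  have "CC * ((1 - gam) * (1 - del / 2) * ?V - Phi N cbar pmin Ebar eps del gam) \<le> CC * ?E"
    using A2 A3 M by (simp add: right_diff_distrib)
  thus ?thesis using C0 by simp
qed

end
theorem lemma7:
  fixes N T :: nat and cbar pmin eps Ebar gam del :: real
    and c :: "nat \<Rightarrow> nat \<Rightarrow> real" and z :: "nat \<Rightarrow> nat \<Rightarrow> real \<Rightarrow> real" and k :: nat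
  assumes "N \<ge> 1" and "T \<ge> 1"
    and "cbar > 0" and "pmin > 0" and "eps > 0" and "Ebar \<ge> pmin * (1 + eps)"
    and "\<And>n t. n \<in> {1..N} \<Longrightarrow> t \<in> {1..T} \<Longrightarrow> 0 \<le> c n t \<and> c n t \<le> cbar"
    and "\<And>n t x. n \<in> {1..N} \<Longrightarrow> t \<in> {1..T} \<Longrightarrow> x \<ge> pmin \<Longrightarrow> 0 \<le> z n t x \<and> z n t x \<le> 1"
    and "0 < gam" and "gam < 1" and "del > 0"
    and "k \<in> {1..Kmax pmin eps Ebar}"
  shows "policy_expected_revenue N T cbar pmin eps Ebar c z gam del
           \<ge> (1 - gam) * (1 - del / 2) * V_ESP N T pmin eps c z k - Phi N cbar pmin Ebar eps del gam"
  by (rule final[OF assms(1) assms(3-6) assms(7) assms(8) assms(9-12) assms(2)])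

end
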